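(* Let $\mu$ be a monotone system over $\{0,1\}^V$ and $\theta\in(0,1)$. Then $P_{\mathrm{cl}}$, $P_{\mathrm{s\text{-}GD}}$ and $P_{\pi\text{-GD}}$ all belong to $\mathcal{MC}_\pi$, i.e. each is reversible with respect to $\pi$ and stochastically monotone.
   Context: Monotone system: for every $v$ and all feasible (positive probability) $\sigma\preceq\tau$ in $\{0,1\}^{V\setminus\{v\}}$ (coordinatewise), $\mu^\sigma_v(1)\le\mu^\tau_v(1)$. Tilted $(\theta*\mu)(\sigma)\propto\mu(\sigma)\theta^{\|\sigma\|_1}$. $\mathsf{lift}$: random map $\{0,1\}^V\to\{0,1,\star\}^V$, independently per coordinate $0\mapsto0$, $1\mapsto\star$ w.p. $1-\theta$, $1\mapsto1$ w.p. $\theta$. $\mathsf{contr}$: $0\mapsto0$, $1,\star\mapsto1$. $\pi$: law of $\mathsf{lift}(X)$, $X\sim\mu$, support $\Omega(\pi)$. $P_{\pi\text{-GD}}$: pick $v$ uniformly, resample $X_v$ from $\pi$ conditioned on $X_{V\setminus\{v\}}$. $P_{\mathrm{cl}}$: $X\mapsto\mathsf{lift}(\mathsf{contr}(X))$. $P_{\mathrm{s\text{-}GD}}$: pick $v$ uniformly; if $X_v=\star$ keep it; otherwise resample $X_v\in\{0,1\}$ from $(\theta*\mu)_v^{\sigma_{V\setminus\{v\}}}$ where $\sigma=\mathsf{contr}(X)$. Order $0<1<\star$, coordinatewise partial order on $\{0,1,\star\}^V$. A function $f:\Omega(\pi)\to\mathbb R_{\ge0}$ is increasing if $X\preceq Y\Rightarrow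 f(X)\le f(Y)$. A chain $P$ is stochastically monotone if $Pf$ is increasing for every increasing $f$. $P$ is reversible w.r.t. $\pi$ if $\pi(\sigma)P(\sigma,\tau)=\pi(\tau)P(\tau,\sigma)$ for all $\sigma,\tau$. *)

theory Defs
  imports Complex_Main
begin

datatype tri = Zero | One | Star

lemma UNIV_tri: "(UNIV :: tri set) = {Zero, One, Star}"
  using tri.exhaust by auto

instance tri :: finite
  by standard (simp add: UNIV_tri)

definition tri_rank :: "tri \<Rightarrow> nat" where
  "tri_rank t = (case t of Zero \<Rightarrow> 0 | One \<Rightarrow> 1 | Star \<Rightarrow> 2)"

definition tri_le :: "('v \<Rightarrow> tri) \<Rightarrow> ('v \<Rightarrow> tri) \<Rightarrow> bool" where
  "tri_le X Y \<longleftrightarrow> (\<forall>v. tri_rank (X v) \<le> tri_rank (Y v))"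

definition is_distr :: "('a::finite \<Rightarrow> real) \<Rightarrow> bool" where
  "is_distr \<nu> \<longleftrightarrow> (\<forall>x. 0 \<le> \<nu> x) \<and> sum \<nu> UNIV = 1"

text \<open>Conditional law of the spin at v given the configuration off v
  (the value of the argument configuration at v is irrelevant).\<close>
definition cond_marg :: "(('v \<Rightarrow> 'a::finite) \<Rightarrow> real) \<Rightarrow> 'v \<Rightarrow> ('v \<Rightarrow> 'a) \<Rightarrow> 'a \<Rightarrow> real" where
  "cond_marg \<nu> v \<sigma> a = \<nu> (\<sigma>(v := a)) / (\<Sum>b\<in>UNIV. \<nu> (\<sigma>(v := b)))"

definition feasible_pin :: "(('v \<Rightarrow> 'a::finite) \<Rightarrow> real) \<Rightarrow> 'v \<Rightarrow> ('v \<Rightarrow> 'a) \<Rightarrow> bool" where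
  "feasible_pin \<nu> v \<sigma> \<longleftrightarrow> (\<Sum>b\<in>UNIV. \<nu> (\<sigma>(v := b))) > 0"

definition monotone_system :: "(('v::finite \<Rightarrow> bool) \<Rightarrow> real) \<Rightarrow> bool" where
  "monotone_system \<mu> \<longleftrightarrow>
     (\<forall>v \<sigma> \<tau>. feasible_pin \<mu> v \<sigma> \<and> feasible_pin \<mu> v \<tau> \<and>
        (\<forall>u. u \<noteq> v \<longrightarrow> \<sigma> u \<le> \<tau> u) \<longrightarrow>
        cond_marg \<mu> v \<sigma> True \<le> cond_marg \<mu> v \<tau> True)"

definition tilt :: "real \<Rightarrow> (('v::finite \<Rightarrow> bool) \<Rightarrow> real) \<Rightarrow> ('v \<Rightarrow> bool) \<Rightarrow> real" where
  "tilt \<theta> \<mu> \<sigma> = \<mu> \<sigma> * \<theta> ^ card {v. \<sigma> v} /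
      (\<Sum>\<rho>\<in>UNIV. \<mu> \<rho> * \<theta> ^ card {v. \<rho> v})"

definition lift_prob :: "real \<Rightarrow> ('v::finite \<Rightarrow> bool) \<Rightarrow> ('v \<Rightarrow> tri) \<Rightarrow> real" where
  "lift_prob \<theta> \<sigma> X = (\<Prod>v\<in>UNIV. (case (\<sigma> v, X v) of
       (False, Zero) \<Rightarrow> 1 | (True, One) \<Rightarrow> \<theta> | (True, Star) \<Rightarrow> 1 - \<theta> | _ \<Rightarrow> 0))"

definition contr :: "('v \<Rightarrow> tri) \<Rightarrow> ('v \<Rightarrow> bool)" where
  "contr X = (\<lambda>v. X v \<noteq> Zero)"

definition lifted_pi :: "real \<Rightarrow> (('v::finite \<Rightarrow> bool) \<Rightarrow> real) \<Rightarrow> ('v \<Rightarrow> tri) \<Rightarrow> real" where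
  "lifted_pi \<theta> \<mu> X = (\<Sum>\<sigma>\<in>UNIV. \<mu> \<sigma> * lift_prob \<theta> \<sigma> X)"

definition supp :: "(('v::finite \<Rightarrow> tri) \<Rightarrow> real) \<Rightarrow> ('v \<Rightarrow> tri) set" where
  "supp \<pi> = {X. \<pi> X > 0}"

definition P_piGD :: "real \<Rightarrow> (('v::finite \<Rightarrow> bool) \<Rightarrow> real) \<Rightarrow> ('v \<Rightarrow> tri) \<Rightarrow> ('v \<Rightarrow> tri) \<Rightarrow> real" where
  "P_piGD \<theta> \<mu> X Y = (1 / real (card (UNIV :: 'v set))) *
     (\<Sum>v\<in>UNIV. if (\<forall>u. u \<noteq> v \<longrightarrow> Y u = X u)
                 then cond_marg (lifted_pi \<theta> \<mu>) v X (Y v) else 0)"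

definition P_cl :: "real \<Rightarrow> ('v::finite \<Rightarrow> tri) \<Rightarrow> ('v \<Rightarrow> tri) \<Rightarrow> real" where
  "P_cl \<theta> X Y = lift_prob \<theta> (contr X) Y"

definition P_sGD :: "real \<Rightarrow> (('v::finite \<Rightarrow> bool) \<Rightarrow> real) \<Rightarrow> ('v \<Rightarrow> tri) \<Rightarrow> ('v \<Rightarrow> tri) \<Rightarrow> real" where
  "P_sGD \<theta> \<mu> X Y = (1 / real (card (UNIV :: 'v set))) *
     (\<Sum>v\<in>UNIV.
        if X v = Star then (if Y = X then 1 else 0)
        else if (\<forall>u. u \<noteq> v \<longrightarrow> Y u = X u) \<and> Y v \<noteq> Star
          then cond_marg (tilt \<theta> \<mu>) v (contr X) (Y v = One) else 0)"

definition reversible_wrt ::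
  "(('v::finite \<Rightarrow> tri) \<Rightarrow> real) \<Rightarrow> (('v \<Rightarrow> tri) \<Rightarrow> ('v \<Rightarrow> tri) \<Rightarrow> real) \<Rightarrow> bool" where
  "reversible_wrt \<pi> P \<longleftrightarrow>
     (\<forall>\<sigma>\<in>supp \<pi>. \<forall>\<tau>\<in>supp \<pi>. \<pi> \<sigma> * P \<sigma> \<tau> = \<pi> \<tau> * P \<tau> \<sigma>)"

definition increasing_on :: "('v \<Rightarrow> tri) set \<Rightarrow> (('v \<Rightarrow> tri) \<Rightarrow> real) \<Rightarrow> bool" where
  "increasing_on \<Omega> f \<longleftrightarrow> (\<forall>X\<in>\<Omega>. \<forall>Y\<in>\<Omega>. tri_le X Y \<longrightarrow> f X \<le> f Y)"

definition stoch_monotone ::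
  "(('v::finite \<Rightarrow> tri) \<Rightarrow> real) \<Rightarrow> (('v \<Rightarrow> tri) \<Rightarrow> ('v \<Rightarrow> tri) \<Rightarrow> real) \<Rightarrow> bool" where
  "stoch_monotone \<pi> P \<longleftrightarrow>
     (\<forall>f. (\<forall>X\<in>supp \<pi>. 0 \<le> f X) \<and> increasing_on (supp \<pi>) f \<longrightarrow>
          increasing_on (supp \<pi>) (\<lambda>X. \<Sum>Y\<in>supp \<pi>. P X Y * f Y))"

definition MC :: "(('v::finite \<Rightarrow> tri) \<Rightarrow> real) \<Rightarrow> (('v \<Rightarrow> tri) \<Rightarrow> ('v \<Rightarrow> tri) \<Rightarrow> real) \<Rightarrow> bool" where
  "MC \<pi> P \<longleftrightarrow> reversible_wrt \<pi> P \<and> stoch_monotone \<pi> P"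

end

theory Submission
  imports Defs
begin


definition tw :: "real \<Rightarrow> tri \<Rightarrow> real" where
  "tw \<theta> a = (case a of Zero \<Rightarrow> 1 | One \<Rightarrow> \<theta> | Star \<Rightarrow> 1 - \<theta>)"

definition wt :: "real \<Rightarrow> ('v::finite \<Rightarrow> tri) \<Rightarrow> real" where
  "wt \<theta> X = (\<Prod>u\<in>UNIV. tw \<theta> (X u))"

definition wrest :: "real \<Rightarrow> 'v \<Rightarrow> ('v::finite \<Rightarrow> tri) \<Rightarrow> real" where
  "wrest \<theta> v X = (\<Prod>u\<in>UNIV-{v}. tw \<theta> (X u))"

lemma tw_pos: "0 < \<theta> \<Longrightarrow> \<theta> < 1 \<Longrightarrow> 0 < tw \<theta> a"
  by (cases a) (auto simp: tw_def)

lemma wt_pos: "0 < \<theta> \<Longrightarrow> \<theta> < 1 \<Longrightarrow> 0 < wt \<theta> X"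
  unfolding wt_def by (rule prod_pos) (simp add: tw_pos)

lemma wrest_pos: "0 < \<theta> \<Longrightarrow> \<theta> < 1 \<Longrightarrow> 0 < wrest \<theta> v X"
  unfolding wrest_def by (rule prod_pos) (simp add: tw_pos)

lemma wt_split: "wt \<theta> X = tw \<theta> (X v) * wrest \<theta> v X"
  unfolding wt_def wrest_def by (simp add: prod.remove)

lemma wrest_upd[simp]: "wrest \<theta> v (X(v:=a)) = wrest \<theta> v X"
  unfolding wrest_def by (rule prod.cong) auto

lemma wt_upd: "wt \<theta> (X(v:=a)) = tw \<theta> a * wrest \<theta> v X"
  using wt_split[of \<theta> "X(v:=a)" v] by simp

lemma contr_upd: "contr (X(v:=a)) = (contr X)(v := (a \<noteq> Zero))"
  unfolding contr_def by auto

lemma lift_prob_eq: "lift_prob \<theta> \<sigma> X = (if contr X = \<sigma> then wt \<theta> X else 0)"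
proof (cases "contr X = \<sigma>")
  case True
  then show ?thesis unfolding lift_prob_def wt_def
    by (auto intro!: prod.cong simp: contr_def tw_def split: tri.splits)
next
  case False
  then obtain u where u: "(X u \<noteq> Zero) \<noteq> \<sigma> u" unfolding contr_def by auto
  have "(case (\<sigma> u, X u) of
       (False, Zero) \<Rightarrow> 1 | (True, One) \<Rightarrow> \<theta> | (True, Star) \<Rightarrow> 1 - \<theta> | _ \<Rightarrow> (0::real)) = 0"
    using u by (cases "\<sigma> u"; cases "X u") auto
  then have "lift_prob \<theta> \<sigma> X = 0" unfolding lift_prob_def
    by (intro prod_zero) auto
  with False show ?thesis by simp
qed

lemma lifted_pi_eq: "lifted_pi \<theta> \<mu> X = \<mu> (contr X) * wt \<theta> X"
  unfolding lifted_pi_def lift_prob_eq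
  by (simp add: if_distrib[where f="\<lambda>x. a * x" for a] cong: if_cong)

lemma supp_eq:
  assumes "0 < \<theta>" "\<theta> < 1"
  shows "X \<in> supp (lifted_pi \<theta> \<mu>) \<longleftrightarrow> 0 < \<mu> (contr X)"
  using wt_pos[OF assms, of X] unfolding supp_def lifted_pi_eq
  by (simp add: zero_less_mult_iff)

lemma sum_agree_off:
  fixes X :: "'v::finite \<Rightarrow> 'a::finite"
  shows "(\<Sum>Y\<in>UNIV. if (\<forall>u. u \<noteq> v \<longrightarrow> Y u = X u) then g Y else (0::real))
       = (\<Sum>a\<in>UNIV. g (X(v:=a)))"
proof -
  have "(\<Sum>Y\<in>UNIV. if (\<forall>u. u \<noteq> v \<longrightarrow> Y u = X u) then g Y else (0::real))
     = (\<Sum>Y\<in>{Y. \<forall>u. u \<noteq> v \<longrightarrow> Y u = X u}. g Y)"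
    by (simp add: sum.If_cases Int_def)
  also have "{Y. \<forall>u. u \<noteq> v \<longrightarrow> Y u = X u} = (\<lambda>a. X(v:=a)) ` UNIV"
  proof (rule set_eqI, rule iffI)
    fix Y assume "Y \<in> {Y. \<forall>u. u \<noteq> v \<longrightarrow> Y u = X u}"
    then have "Y = X(v := Y v)" by (auto simp: fun_eq_iff)
    then show "Y \<in> (\<lambda>a. X(v:=a)) ` UNIV" by blast
  qed auto
  also have "(\<Sum>Y\<in>(\<lambda>a. X(v:=a)) ` UNIV. g Y) = (\<Sum>a\<in>UNIV. g (X(v:=a)))"
    by (rule sum.reindex_cong[where l="\<lambda>a. X(v:=a)"]) (auto simp: inj_on_def dest: fun_cong[where x=v])
  finally show ?thesis .
qed

lemma sum_tri: "(\<Sum>a\<in>UNIV. g a) = g Zero + g One + (g Star :: real)"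
  by (simp add: UNIV_tri)

lemma sum_split_coord:
  fixes G :: "('v::finite \<Rightarrow> tri) \<Rightarrow> real"
  shows "(\<Sum>Y\<in>UNIV. G Y) = (\<Sum>Y\<in>{Y. Y w = Zero}. \<Sum>a\<in>UNIV. G (Y(w:=a)))"
proof -
  have bij: "bij_betw (\<lambda>(Y,a). Y(w:=a)) ({Y. Y w = Zero} \<times> UNIV) UNIV"
    unfolding bij_betw_def
  proof
    show "inj_on (\<lambda>(Y, a). Y(w := a)) ({Y. Y w = Zero} \<times> UNIV)"
    proof (rule inj_onI, clarify)
      fix Y a Y' a'
      assume h: "Y w = Zero" "Y' w = Zero" "Y(w := a) = Y'(w := a')"
      then have "a = a'" by (metis fun_upd_same)
      moreover have "Y = Y'"
      proof
        fix u
        have e: "(Y(w:=a)) u = (Y'(w:=a')) u" using h(3) by simp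
        show "Y u = Y' u"
        proof (cases "u = w")
          case True then show ?thesis using h by simp
        next
          case False then show ?thesis using e by simp
        qed
      qed
      ultimately show "Y = Y' \<and> a = a'" by simp
    qed
    show "(\<lambda>(Y, a). Y(w := a)) ` ({Y. Y w = Zero} \<times> UNIV) = UNIV"
    proof (rule set_eqI, rule iffI)
      fix Z :: "'v \<Rightarrow> tri"
      show "Z \<in> (\<lambda>(Y, a). Y(w := a)) ` ({Y. Y w = Zero} \<times> UNIV)"
        by (rule image_eqI[where x="(Z(w:=Zero), Z w)"]) auto
    qed auto
  qed
  have "(\<Sum>Y\<in>{Y. Y w = Zero}. \<Sum>a\<in>UNIV. G (Y(w:=a))) = (\<Sum>p\<in>{Y. Y w = Zero} \<times> UNIV. G ((\<lambda>(Y,a). Y(w:=a)) p))"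
    by (subst sum.cartesian_product) (simp add: case_prod_beta)
  also have "\<dots> = (\<Sum>Y\<in>UNIV. G Y)"
    by (rule sum.reindex_bij_betw[OF bij])
  finally show ?thesis by simp
qed




lemma tri_le_refl: "tri_le X X" unfolding tri_le_def by simp
lemma tri_le_trans: "tri_le X Y \<Longrightarrow> tri_le Y Z \<Longrightarrow> tri_le X Z"
  unfolding tri_le_def by (meson order_trans)

lemma tri_le_upd: "tri_rank a \<le> tri_rank b \<Longrightarrow> tri_le (Y(w:=a)) (Y(w:=b))"
  unfolding tri_le_def by auto

lemma tri_le_upd2: "tri_le X X' \<Longrightarrow> tri_le (X(w:=a)) (X'(w:=a))"
  unfolding tri_le_def by auto

lemma tri_le_contr: "tri_le X X' \<Longrightarrow> contr X u \<Longrightarrow> contr X' u"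
  unfolding tri_le_def contr_def tri_rank_def
  by (drule spec[of _ u]) (auto split: tri.splits)

lemma extend_incr:
  fixes f :: "('v::finite \<Rightarrow> tri) \<Rightarrow> real"
  assumes nn: "\<forall>X\<in>S. 0 \<le> f X" and inc: "increasing_on S f"
  obtains F where "\<And>Y Y'. tri_le Y Y' \<Longrightarrow> F Y \<le> F Y'" "\<And>X. X \<in> S \<Longrightarrow> F X = f X"
proof -
  define F where "F Y = Max (insert 0 (f ` {Z\<in>S. tri_le Z Y}))" for Y
  have 1: "F Y \<le> F Y'" if "tri_le Y Y'" for Y Y'
    unfolding F_def
    by (rule Max_mono) (use that tri_le_trans in auto)
  have 2: "F X = f X" if "X \<in> S" for X
    unfolding F_def
  proof (rule Max_eqI)
    fix y assume "y \<in> insert 0 (f ` {Z \<in> S. tri_le Z X})"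
    then show "y \<le> f X" using nn inc that unfolding increasing_on_def by auto
  next
    show "f X \<in> insert 0 (f ` {Z \<in> S. tri_le Z X})" using that tri_le_refl by auto
  qed auto
  show ?thesis using 1 2 that by blast
qed

lemma stoch_mono_intro:
  fixes \<pi> :: "('v::finite \<Rightarrow> tri) \<Rightarrow> real"
  assumes zero: "\<And>X Y. X \<in> supp \<pi> \<Longrightarrow> Y \<notin> supp \<pi> \<Longrightarrow> P X Y = 0"
  and mono: "\<And>F X X'. (\<And>Y Y'. tri_le Y Y' \<Longrightarrow> F Y \<le> F Y') \<Longrightarrow> X \<in> supp \<pi> \<Longrightarrow>
      X' \<in> supp \<pi> \<Longrightarrow> tri_le X X' \<Longrightarrow>
      (\<Sum>Y\<in>UNIV. P X Y * F Y) \<le> (\<Sum>Y\<in>UNIV. P X' Y * F Y)"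
  shows "stoch_monotone \<pi> P"
  unfolding stoch_monotone_def
proof (intro allI impI)
  fix f :: "('v \<Rightarrow> tri) \<Rightarrow> real"
  assume h: "(\<forall>X\<in>supp \<pi>. 0 \<le> f X) \<and> increasing_on (supp \<pi>) f"
  then obtain F where F1: "\<And>Y Y'. tri_le Y Y' \<Longrightarrow> F Y \<le> F Y'"
    and F2: "\<And>X. X \<in> supp \<pi> \<Longrightarrow> F X = f X"
    using extend_incr by blast
  have eq: "(\<Sum>Y\<in>supp \<pi>. P X Y * f Y) = (\<Sum>Y\<in>UNIV. P X Y * F Y)" if "X \<in> supp \<pi>" for X
  proof -
    have "(\<Sum>Y\<in>supp \<pi>. P X Y * f Y) = (\<Sum>Y\<in>supp \<pi>. P X Y * F Y)"
      using F2 by simp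
    also have "\<dots> = (\<Sum>Y\<in>UNIV. P X Y * F Y)"
      by (rule sum.mono_neutral_left) (use zero that in auto)
    finally show ?thesis .
  qed
  show "increasing_on (supp \<pi>) (\<lambda>X. \<Sum>Y\<in>supp \<pi>. P X Y * f Y)"
    unfolding increasing_on_def using eq mono[OF F1] by simp
qed

lemma contr_upd_eq:
  assumes "\<sigma> w = False" "\<tau> w = False"
  shows "(\<tau>(w:=c) = \<sigma>(w:=d)) \<longleftrightarrow> (c = d \<and> \<tau> = \<sigma>)"
proof
  assume h: "\<tau>(w:=c) = \<sigma>(w:=d)"
  have "c = d" using fun_cong[OF h, of w] by simp
  moreover have "\<tau> = \<sigma>"
  proof
    fix u
    have e: "(\<tau>(w:=c)) u = (\<sigma>(w:=d)) u" using h by simp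
    show "\<tau> u = \<sigma> u" using e assms by (cases "u = w") auto
  qed
  ultimately show "c = d \<and> \<tau> = \<sigma>" ..
qed auto

definition Ecl :: "real \<Rightarrow> (('v::finite \<Rightarrow> tri) \<Rightarrow> real) \<Rightarrow> ('v \<Rightarrow> bool) \<Rightarrow> real" where
  "Ecl \<theta> F \<sigma> = (\<Sum>Y\<in>UNIV. lift_prob \<theta> \<sigma> Y * F Y)"

lemma Ecl_flip:
  fixes F :: "('v::finite \<Rightarrow> tri) \<Rightarrow> real"
  assumes F: "\<And>Y Y'. tri_le Y Y' \<Longrightarrow> F Y \<le> F Y'" and th: "0 < \<theta>" "\<theta> < 1"
    and sw: "\<sigma> w = False"
  shows "Ecl \<theta> F \<sigma> \<le> Ecl \<theta> F (\<sigma>(w:=True))"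
proof -
  have "Ecl \<theta> F \<sigma> = (\<Sum>Y\<in>{Y. Y w = Zero}. \<Sum>a\<in>UNIV. lift_prob \<theta> \<sigma> (Y(w:=a)) * F (Y(w:=a)))"
    unfolding Ecl_def by (rule sum_split_coord)
  also have "\<dots> \<le> (\<Sum>Y\<in>{Y. Y w = Zero}. \<Sum>a\<in>UNIV. lift_prob \<theta> (\<sigma>(w:=True)) (Y(w:=a)) * F (Y(w:=a)))"
  proof (rule sum_mono)
    fix Y :: "'v \<Rightarrow> tri" assume "Y \<in> {Y. Y w = Zero}"
    then have Yw: "Y w = Zero" by simp
    then have cYw: "contr Y w = False" by (simp add: contr_def)
    have e1: "(contr Y)(w := c) = \<sigma> \<longleftrightarrow> (c = False \<and> contr Y = \<sigma>)" for c
      using contr_upd_eq[where \<sigma>=\<sigma> and \<tau>="contr Y" and w=w and c=c and d=False, OF sw cYw] fun_upd_idem[of \<sigma> w False, OF sw] by simp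
    have e2: "(contr Y)(w := c) = \<sigma>(w:=True) \<longleftrightarrow> (c = True \<and> contr Y = \<sigma>)" for c
      using contr_upd_eq[where \<sigma>=\<sigma> and \<tau>="contr Y" and w=w and c=c and d=True, OF sw cYw] by simp
    have r: "wrest \<theta> w Y \<ge> 0" using wrest_pos[OF th] less_imp_le by blast
    have m1: "F (Y(w:=Zero)) \<le> F (Y(w:=One))" by (rule F, rule tri_le_upd) (simp add: tri_rank_def)
    have m2: "F (Y(w:=Zero)) \<le> F (Y(w:=Star))" by (rule F, rule tri_le_upd) (simp add: tri_rank_def)
    have "F (Y(w:=Zero)) \<le> \<theta> * F (Y(w:=One)) + (1 - \<theta>) * F (Y(w:=Star))"
    proof -
      have "\<theta> * F (Y(w:=Zero)) \<le> \<theta> * F (Y(w:=One))" using m1 th by simp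
      moreover have "(1-\<theta>) * F (Y(w:=Zero)) \<le> (1-\<theta>) * F (Y(w:=Star))" using m2 th by simp
      ultimately show ?thesis by (simp add: algebra_simps)
    qed
    then have ineq: "wrest \<theta> w Y * F (Y(w:=Zero)) \<le> wrest \<theta> w Y * (\<theta> * F (Y(w:=One)) + (1 - \<theta>) * F (Y(w:=Star)))"
      using r by (rule mult_left_mono)
    have l1: "lift_prob \<theta> \<sigma> (Y(w:=Zero)) = (if contr Y = \<sigma> then wrest \<theta> w Y else 0)"
      unfolding lift_prob_eq contr_upd e1 wt_upd by (simp add: tw_def)
    have l2: "lift_prob \<theta> \<sigma> (Y(w:=One)) = 0"
      unfolding lift_prob_eq contr_upd e1 by simp
    have l3: "lift_prob \<theta> \<sigma> (Y(w:=Star)) = 0"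
      unfolding lift_prob_eq contr_upd e1 by simp
    have l4: "lift_prob \<theta> (\<sigma>(w:=True)) (Y(w:=Zero)) = 0"
      unfolding lift_prob_eq contr_upd e2 by simp
    have l5: "lift_prob \<theta> (\<sigma>(w:=True)) (Y(w:=One)) = (if contr Y = \<sigma> then \<theta> * wrest \<theta> w Y else 0)"
      unfolding lift_prob_eq contr_upd e2 wt_upd by (simp add: tw_def)
    have l6: "lift_prob \<theta> (\<sigma>(w:=True)) (Y(w:=Star)) = (if contr Y = \<sigma> then (1-\<theta>) * wrest \<theta> w Y else 0)"
      unfolding lift_prob_eq contr_upd e2 wt_upd by (simp add: tw_def)
    show "(\<Sum>a\<in>UNIV. lift_prob \<theta> \<sigma> (Y(w:=a)) * F (Y(w:=a)))
        \<le> (\<Sum>a\<in>UNIV. lift_prob \<theta> (\<sigma>(w:=True)) (Y(w:=a)) * F (Y(w:=a)))"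
    proof (cases "contr Y = \<sigma>")
      case True
      have eqL: "(\<Sum>a\<in>UNIV. lift_prob \<theta> \<sigma> (Y(w:=a)) * F (Y(w:=a))) = wrest \<theta> w Y * F (Y(w:=Zero))"
        unfolding sum_tri l1 l2 l3 using True by simp
      have eqR: "(\<Sum>a\<in>UNIV. lift_prob \<theta> (\<sigma>(w:=True)) (Y(w:=a)) * F (Y(w:=a)))
          = wrest \<theta> w Y * (\<theta> * F (Y(w:=One)) + (1 - \<theta>) * F (Y(w:=Star)))"
        unfolding sum_tri l4 l5 l6 using True by (simp add: distrib_left)
      show ?thesis unfolding eqL eqR by (rule ineq)
    next
      case False
      then show ?thesis unfolding sum_tri l1 l2 l3 l4 l5 l6 by simp
    qed
  qed
  also have "\<dots> = Ecl \<theta> F (\<sigma>(w:=True))"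
    unfolding Ecl_def by (rule sum_split_coord[symmetric])
  finally show ?thesis .
qed

lemma Ecl_mono_set:
  fixes F :: "('v::finite \<Rightarrow> tri) \<Rightarrow> real"
  assumes F: "\<And>Y Y'. tri_le Y Y' \<Longrightarrow> F Y \<le> F Y'" and th: "0 < \<theta>" "\<theta> < 1"
  shows "finite D \<Longrightarrow> Ecl \<theta> F \<sigma> \<le> Ecl \<theta> F (\<lambda>u. \<sigma> u \<or> u \<in> D)"
proof (induction D rule: finite_induct)
  case empty then show ?case by simp
next
  case (insert w D)
  define \<tau> where "\<tau> = (\<lambda>u. \<sigma> u \<or> u \<in> D)"
  have eq: "(\<lambda>u. \<sigma> u \<or> u \<in> insert w D) = \<tau>(w:=True)"
    unfolding \<tau>_def by (rule ext) auto
  have "Ecl \<theta> F \<tau> \<le> Ecl \<theta> F (\<tau>(w:=True))"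
  proof (cases "\<tau> w")
    case True then show ?thesis by (simp add: fun_upd_idem)
  next
    case False then show ?thesis using Ecl_flip[where F=F, OF F th] by blast
  qed
  then show ?case using insert.IH unfolding eq \<tau>_def by simp
qed

lemma Ecl_mono:
  fixes F :: "('v::finite \<Rightarrow> tri) \<Rightarrow> real"
  assumes F: "\<And>Y Y'. tri_le Y Y' \<Longrightarrow> F Y \<le> F Y'" and th: "0 < \<theta>" "\<theta> < 1"
    and le: "\<And>u. \<sigma> u \<Longrightarrow> \<sigma>' u"
  shows "Ecl \<theta> F \<sigma> \<le> Ecl \<theta> F \<sigma>'"
proof -
  have "\<sigma>' = (\<lambda>u. \<sigma> u \<or> u \<in> {u. \<sigma>' u})" using le by auto
  then show ?thesis using Ecl_mono_set[where F=F, OF F th, where D="{u. \<sigma>' u}" and \<sigma>=\<sigma>] by simp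
qed

lemma P_cl_MC:
  fixes \<mu> :: "('v::finite \<Rightarrow> bool) \<Rightarrow> real"
  assumes th: "0 < \<theta>" "\<theta> < 1"
  shows "MC (lifted_pi \<theta> \<mu>) (P_cl \<theta>)"
  unfolding MC_def
proof
  show "reversible_wrt (lifted_pi \<theta> \<mu>) (P_cl \<theta>)"
    unfolding reversible_wrt_def P_cl_def lifted_pi_eq lift_prob_eq by auto
  show "stoch_monotone (lifted_pi \<theta> \<mu>) (P_cl \<theta>)"
  proof (rule stoch_mono_intro)
    fix X Y :: "'v \<Rightarrow> tri"
    assume "X \<in> supp (lifted_pi \<theta> \<mu>)" "Y \<notin> supp (lifted_pi \<theta> \<mu>)"
    then show "P_cl \<theta> X Y = 0" unfolding supp_eq[OF th] P_cl_def lift_prob_eq by auto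
  next
    fix F :: "('v \<Rightarrow> tri) \<Rightarrow> real" and X X' :: "'v \<Rightarrow> tri"
    assume F: "\<And>Y Y'. tri_le Y Y' \<Longrightarrow> F Y \<le> F Y'" and le: "tri_le X X'"
    show "(\<Sum>Y\<in>UNIV. P_cl \<theta> X Y * F Y) \<le> (\<Sum>Y\<in>UNIV. P_cl \<theta> X' Y * F Y)"
      using Ecl_mono[where F=F and \<sigma>="contr X" and \<sigma>'="contr X'", OF F th] tri_le_contr[OF le]
      unfolding Ecl_def P_cl_def by blast
  qed
qed




lemma cond_marg_upd[simp]: "cond_marg \<nu> v (\<sigma>(v:=c)) = cond_marg \<nu> v \<sigma>"
  by (simp add: cond_marg_def fun_eq_iff)

lemma sum_bool: "(\<Sum>b\<in>UNIV. g b) = g False + (g True :: real)"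
  by (simp add: UNIV_bool)

lemma conv_mono:
  fixes p p' A B A' B' :: real
  assumes "0 \<le> p" "p \<le> p'" "p' \<le> 1" "A \<le> B" "A \<le> A'" "B \<le> B'"
  shows "(1-p)*A + p*B \<le> (1-p')*A' + p'*B'"
proof -
  have "0 \<le> (p'-p)*(B-A)" using assms by simp
  moreover have "(1-p')*A \<le> (1-p')*A'" using assms by (intro mult_left_mono) auto
  moreover have "p'*B \<le> p'*B'" using assms by (intro mult_left_mono) auto
  ultimately show ?thesis by (simp add: algebra_simps)
qed

lemma tilt_frac_mono:
  fixes a b a' b' \<theta> :: real
  assumes "0 \<le> a" "0 \<le> b" "0 \<le> a'" "0 \<le> b'" "0 < a + b" "0 < a' + b'" "0 < \<theta>"
    and h: "b / (a + b) \<le> b' / (a' + b')"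
  shows "b*\<theta> / (a + b*\<theta>) \<le> b'*\<theta> / (a' + b'*\<theta>)"
proof -
  have "b * (a' + b') \<le> b' * (a + b)" using h assms by (simp add: divide_le_eq le_divide_eq field_simps)
  then have k: "b * a' \<le> b' * a" by (simp add: algebra_simps)
  have p1: "0 < a + b*\<theta>"
  proof (cases "b = 0")
    case True then show ?thesis using assms by simp
  next
    case False then show ?thesis using assms by (simp add: add_nonneg_pos)
  qed
  have p2: "0 < a' + b'*\<theta>"
  proof (cases "b' = 0")
    case True then show ?thesis using assms by simp
  next
    case False then show ?thesis using assms by (simp add: add_nonneg_pos)
  qed
  have "b*\<theta> * (a' + b'*\<theta>) \<le> b'*\<theta> * (a + b*\<theta>)"
    using mult_left_mono[OF k, of \<theta>] assms by (simp add: algebra_simps)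
  then show ?thesis using p1 p2 by (simp add: divide_le_eq le_divide_eq field_simps)
qed

lemma card_upd_true:
  fixes \<sigma> :: "'v::finite \<Rightarrow> bool"
  shows "card {u. (\<sigma>(v:=True)) u} = Suc (card {u. (\<sigma>(v:=False)) u})"
proof -
  have "{u. (\<sigma>(v:=True)) u} = insert v {u. (\<sigma>(v:=False)) u}" by auto
  then show ?thesis by (simp add: card_insert_disjoint)
qed

lemma pos_pair:
  fixes \<mu> :: "('v::finite \<Rightarrow> bool) \<Rightarrow> real"
  assumes nn: "\<And>\<rho>. 0 \<le> \<mu> \<rho>" and pos: "0 < \<mu> \<sigma>"
  shows "0 < \<mu> (\<sigma>(v:=False)) + \<mu> (\<sigma>(v:=True))"
proof (cases "\<sigma> v")
  case True
  then have "\<sigma>(v:=True) = \<sigma>" by (simp add: fun_upd_idem)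
  then show ?thesis using nn[of "\<sigma>(v:=False)"] pos by simp
next
  case False
  then have "\<sigma>(v:=False) = \<sigma>" by (simp add: fun_upd_idem)
  then show ?thesis using nn[of "\<sigma>(v:=True)"] pos by simp
qed

lemma cm_mu: "cond_marg \<mu> v \<sigma> True = \<mu> (\<sigma>(v:=True)) / (\<mu> (\<sigma>(v:=False)) + \<mu> (\<sigma>(v:=True)))"
  unfolding cond_marg_def sum_bool by simp

lemma cm_tilt:
  fixes \<mu> :: "('v::finite \<Rightarrow> bool) \<Rightarrow> real"
  assumes nn: "\<And>\<rho>. 0 \<le> \<mu> \<rho>" and pos: "0 < \<mu> \<sigma>" and th: "0 < \<theta>" "\<theta> < 1"
  shows "cond_marg (tilt \<theta> \<mu>) v \<sigma> True =
      \<mu> (\<sigma>(v:=True)) * \<theta> / (\<mu> (\<sigma>(v:=False)) + \<mu> (\<sigma>(v:=True)) * \<theta>)"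
    and "cond_marg (tilt \<theta> \<mu>) v \<sigma> False =
      \<mu> (\<sigma>(v:=False)) / (\<mu> (\<sigma>(v:=False)) + \<mu> (\<sigma>(v:=True)) * \<theta>)"
    and "0 < \<mu> (\<sigma>(v:=False)) + \<mu> (\<sigma>(v:=True)) * \<theta>"
proof -
  define N where "N = (\<Sum>\<rho>\<in>UNIV. \<mu> \<rho> * \<theta> ^ card {v. \<rho> v})"
  have N: "0 < N" unfolding N_def
    by (rule sum_pos2[where i=\<sigma>]) (use nn pos th in auto)
  define k where "k = card {u. (\<sigma>(v:=False)) u}"
  define a where "a = \<mu> (\<sigma>(v:=False))"
  define b where "b = \<mu> (\<sigma>(v:=True))"
  have ab: "0 \<le> a" "0 \<le> b" "0 < a + b" using nn pos_pair[where \<mu>=\<mu> and \<sigma>=\<sigma> and v=v, OF nn pos] unfolding a_def b_def by auto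
  have tk: "0 < \<theta>^k" using th by simp
  have t0: "tilt \<theta> \<mu> (\<sigma>(v:=False)) = a * \<theta>^k / N"
    unfolding tilt_def N_def a_def k_def by simp
  have t1: "tilt \<theta> \<mu> (\<sigma>(v:=True)) = (b * \<theta>) * \<theta>^k / N"
    unfolding tilt_def N_def b_def k_def card_upd_true by (simp add: algebra_simps)
  show pp: "0 < \<mu> (\<sigma>(v:=False)) + \<mu> (\<sigma>(v:=True)) * \<theta>"
  proof (cases "b = 0")
    case True then show ?thesis using ab unfolding a_def b_def by simp
  next
    case False then show ?thesis using ab th unfolding a_def b_def by (simp add: add_nonneg_pos)
  qed
  then have pp': "0 < a + b * \<theta>" unfolding a_def b_def .
  have canc: "(x * \<theta>^k / N) / (y * \<theta>^k / N) = x / y" for x y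
    using N tk th by simp
  have D: "(\<Sum>c\<in>UNIV. tilt \<theta> \<mu> (\<sigma>(v:=c))) = (a + b*\<theta>) * \<theta>^k / N"
    unfolding sum_bool fun_upd_upd t0 t1 by (simp add: add_divide_distrib distrib_right)
  show "cond_marg (tilt \<theta> \<mu>) v \<sigma> True =
      \<mu> (\<sigma>(v:=True)) * \<theta> / (\<mu> (\<sigma>(v:=False)) + \<mu> (\<sigma>(v:=True)) * \<theta>)"
    unfolding cond_marg_def D t1 a_def[symmetric] b_def[symmetric]
    using N tk pp' th by (simp add: canc)
  show "cond_marg (tilt \<theta> \<mu>) v \<sigma> False =
      \<mu> (\<sigma>(v:=False)) / (\<mu> (\<sigma>(v:=False)) + \<mu> (\<sigma>(v:=True)) * \<theta>)"
    unfolding cond_marg_def D t0 a_def[symmetric] b_def[symmetric]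
    using N tk pp' th by (simp add: canc)
qed




lemma sum_kernel:
  fixes t :: "'v::finite \<Rightarrow> 'x::finite \<Rightarrow> real"
  shows "(\<Sum>Y\<in>(UNIV::'x set). (c * (\<Sum>v\<in>(UNIV::'v set). t v Y)) * F Y)
     = c * (\<Sum>v\<in>UNIV. \<Sum>Y\<in>UNIV. t v Y * F Y)"
proof -
  have "(\<Sum>Y\<in>(UNIV::'x set). (c * (\<Sum>v\<in>(UNIV::'v set). t v Y)) * F Y)
      = c * (\<Sum>Y\<in>UNIV. \<Sum>v\<in>UNIV. t v Y * F Y)"
    by (simp add: sum_distrib_left sum_distrib_right mult.assoc)
  also have "\<dots> = c * (\<Sum>v\<in>UNIV. \<Sum>Y\<in>UNIV. t v Y * F Y)"
    by (subst sum.swap) simp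
  finally show ?thesis .
qed

lemma tri_le_star: "X' v = Star \<Longrightarrow> tri_le X X' \<Longrightarrow> tri_le (X(v:=a)) X'"
  unfolding tri_le_def tri_rank_def by (auto split: tri.splits)

lemma tri_le_nonstar: "tri_le X X' \<Longrightarrow> X' v \<noteq> Star \<Longrightarrow> X v \<noteq> Star"
  unfolding tri_le_def tri_rank_def by (drule spec[of _ v]) (auto split: tri.splits)

definition sgd_t :: "real \<Rightarrow> (('v::finite \<Rightarrow> bool) \<Rightarrow> real) \<Rightarrow> 'v \<Rightarrow> ('v \<Rightarrow> tri) \<Rightarrow> ('v \<Rightarrow> tri) \<Rightarrow> real" where
  "sgd_t \<theta> \<mu> v X Y =
        (if X v = Star then (if Y = X then 1 else 0)
        else if (\<forall>u. u \<noteq> v \<longrightarrow> Y u = X u) \<and> Y v \<noteq> Star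
          then cond_marg (tilt \<theta> \<mu>) v (contr X) (Y v = One) else 0)"

lemma P_sGD_t: "P_sGD \<theta> \<mu> X Y = (1 / real (card (UNIV :: 'v set))) * (\<Sum>v\<in>UNIV. sgd_t \<theta> \<mu> v X Y)"
  for X Y :: "'v::finite \<Rightarrow> tri"
  unfolding P_sGD_def sgd_t_def by simp

lemma sgd_sum:
  "(\<Sum>Y\<in>UNIV. sgd_t \<theta> \<mu> v X Y * F Y) = (if X v = Star then F X else
     cond_marg (tilt \<theta> \<mu>) v (contr X) False * F (X(v:=Zero)) +
     cond_marg (tilt \<theta> \<mu>) v (contr X) True * F (X(v:=One)))"
proof (cases "X v = Star")
  case True
  have e: "sgd_t \<theta> \<mu> v X Y * F Y = (if Y = X then F X else 0)" for Y
    using True by (auto simp: sgd_t_def)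
  show ?thesis using True by (simp add: e)
next
  case False
  have e: "sgd_t \<theta> \<mu> v X Y * F Y = (if (\<forall>u. u \<noteq> v \<longrightarrow> Y u = X u) then
      (if Y v \<noteq> Star then cond_marg (tilt \<theta> \<mu>) v (contr X) (Y v = One) else 0) * F Y else 0)" for Y
    using False by (auto simp: sgd_t_def)
  have "(\<Sum>Y\<in>UNIV. sgd_t \<theta> \<mu> v X Y * F Y) = (\<Sum>a\<in>UNIV.
      (\<lambda>Y. (if Y v \<noteq> Star then cond_marg (tilt \<theta> \<mu>) v (contr X) (Y v = One) else 0) * F Y) (X(v:=a)))"
    unfolding e by (rule sum_agree_off)
  then show ?thesis using False unfolding sum_tri by simp
qed

lemma feasible_of_pos:
  fixes \<mu> :: "('v::finite \<Rightarrow> bool) \<Rightarrow> real"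
  assumes nn: "\<And>\<rho>. 0 \<le> \<mu> \<rho>" and pos: "0 < \<mu> \<sigma>"
  shows "feasible_pin \<mu> v \<sigma>"
  unfolding feasible_pin_def sum_bool using pos_pair[where \<mu>=\<mu> and \<sigma>=\<sigma> and v=v, OF nn pos] .

lemma tilt_cm_mono:
  fixes \<mu> :: "('v::finite \<Rightarrow> bool) \<Rightarrow> real"
  assumes nn: "\<And>\<rho>. 0 \<le> \<mu> \<rho>" and ms: "monotone_system \<mu>" and th: "0 < \<theta>" "\<theta> < 1"
    and pos: "0 < \<mu> \<sigma>" and pos': "0 < \<mu> \<sigma>'" and le: "\<And>u. \<sigma> u \<Longrightarrow> \<sigma>' u"
  shows "cond_marg (tilt \<theta> \<mu>) v \<sigma> True \<le> cond_marg (tilt \<theta> \<mu>) v \<sigma>' True"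
proof -
  have "cond_marg \<mu> v \<sigma> True \<le> cond_marg \<mu> v \<sigma>' True"
    using ms feasible_of_pos[where \<mu>=\<mu>, OF nn pos] feasible_of_pos[where \<mu>=\<mu>, OF nn pos'] le
    unfolding monotone_system_def by (metis le_boolI)
  then have "\<mu> (\<sigma>(v:=True)) / (\<mu> (\<sigma>(v:=False)) + \<mu> (\<sigma>(v:=True)))
     \<le> \<mu> (\<sigma>'(v:=True)) / (\<mu> (\<sigma>'(v:=False)) + \<mu> (\<sigma>'(v:=True)))"
    unfolding cm_mu .
  then have "\<mu> (\<sigma>(v:=True)) * \<theta> / (\<mu> (\<sigma>(v:=False)) + \<mu> (\<sigma>(v:=True)) * \<theta>)
     \<le> \<mu> (\<sigma>'(v:=True)) * \<theta> / (\<mu> (\<sigma>'(v:=False)) + \<mu> (\<sigma>'(v:=True)) * \<theta>)"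
    by (rule tilt_frac_mono[rotated 7])
       (use nn th pos_pair[where \<mu>=\<mu> and \<sigma>=\<sigma> and v=v, OF nn pos]
            pos_pair[where \<mu>=\<mu> and \<sigma>=\<sigma>' and v=v, OF nn pos'] in auto)
  then show ?thesis
    unfolding cm_tilt(1)[where \<mu>=\<mu>, OF nn pos th] cm_tilt(1)[where \<mu>=\<mu>, OF nn pos' th] .
qed

lemma tilt_cm_bounds:
  fixes \<mu> :: "('v::finite \<Rightarrow> bool) \<Rightarrow> real"
  assumes nn: "\<And>\<rho>. 0 \<le> \<mu> \<rho>" and th: "0 < \<theta>" "\<theta> < 1" and pos: "0 < \<mu> \<sigma>"
  shows "cond_marg (tilt \<theta> \<mu>) v \<sigma> False = 1 - cond_marg (tilt \<theta> \<mu>) v \<sigma> True"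
    "0 \<le> cond_marg (tilt \<theta> \<mu>) v \<sigma> True" "cond_marg (tilt \<theta> \<mu>) v \<sigma> True \<le> 1"
proof -
  note c = cm_tilt[where \<mu>=\<mu> and v=v, OF nn pos th]
  have d: "0 < \<mu> (\<sigma>(v:=False)) + \<mu> (\<sigma>(v:=True)) * \<theta>" by (rule c(3))
  show "cond_marg (tilt \<theta> \<mu>) v \<sigma> False = 1 - cond_marg (tilt \<theta> \<mu>) v \<sigma> True"
    unfolding c(1) c(2) using d by (simp add: field_simps)
  show "0 \<le> cond_marg (tilt \<theta> \<mu>) v \<sigma> True"
    unfolding c(1) using d nn th by simp
  show "cond_marg (tilt \<theta> \<mu>) v \<sigma> True \<le> 1"
    unfolding c(1) using d nn[of "\<sigma>(v:=False)"] by simp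
qed

lemma sgd_site_mono:
  fixes \<mu> :: "('v::finite \<Rightarrow> bool) \<Rightarrow> real" and F :: "('v \<Rightarrow> tri) \<Rightarrow> real"
  assumes nn: "\<And>\<rho>. 0 \<le> \<mu> \<rho>" and ms: "monotone_system \<mu>" and th: "0 < \<theta>" "\<theta> < 1"
    and pos: "0 < \<mu> (contr X)" and pos': "0 < \<mu> (contr X')" and le: "tri_le X X'"
    and F: "\<And>Y Y'. tri_le Y Y' \<Longrightarrow> F Y \<le> F Y'"
  shows "(\<Sum>Y\<in>UNIV. sgd_t \<theta> \<mu> v X Y * F Y) \<le> (\<Sum>Y\<in>UNIV. sgd_t \<theta> \<mu> v X' Y * F Y)"
proof -
  define p where "p = cond_marg (tilt \<theta> \<mu>) v (contr X) True"
  define p' where "p' = cond_marg (tilt \<theta> \<mu>) v (contr X') True"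
  note b = tilt_cm_bounds[where \<mu>=\<mu> and v=v, OF nn th pos]
  note b' = tilt_cm_bounds[where \<mu>=\<mu> and v=v, OF nn th pos']
  show ?thesis
  proof (cases "X' v = Star")
    case True
    show ?thesis
    proof (cases "X v = Star")
      case True
      then show ?thesis using \<open>X' v = Star\<close> F[OF le] unfolding sgd_sum by simp
    next
      case False
      have A: "F (X(v:=Zero)) \<le> F X'" by (rule F, rule tri_le_star[OF \<open>X' v = Star\<close> le])
      have B: "F (X(v:=One)) \<le> F X'" by (rule F, rule tri_le_star[OF \<open>X' v = Star\<close> le])
      have "(1-p) * F (X(v:=Zero)) + p * F (X(v:=One)) \<le> (1-p) * F X' + p * F X'"
        using A B b unfolding p_def by (intro add_mono mult_left_mono) auto
      moreover have "(\<Sum>Y\<in>UNIV. sgd_t \<theta> \<mu> v X Y * F Y) = (1-p) * F (X(v:=Zero)) + p * F (X(v:=One))"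
        unfolding sgd_sum b(1) p_def using False by simp
      moreover have "(\<Sum>Y\<in>UNIV. sgd_t \<theta> \<mu> v X' Y * F Y) = F X'"
        unfolding sgd_sum using True by simp
      moreover have "(1-p) * F X' + p * F X' = F X'" by (simp add: algebra_simps)
      ultimately show ?thesis by linarith
    qed
  next
    case False
    have Xv: "X v \<noteq> Star" using tri_le_nonstar[OF le False] .
    have pp: "p \<le> p'" unfolding p_def p'_def
      by (rule tilt_cm_mono[OF nn ms th pos pos']) (use tri_le_contr[OF le] in auto)
    have "(1-p) * F (X(v:=Zero)) + p * F (X(v:=One)) \<le> (1-p') * F (X'(v:=Zero)) + p' * F (X'(v:=One))"
    proof (rule conv_mono)
      show "0 \<le> p" using b unfolding p_def by simp
      show "p \<le> p'" by (rule pp)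
      show "p' \<le> 1" using b' unfolding p'_def by simp
      show "F (X(v:=Zero)) \<le> F (X(v:=One))" by (rule F, rule tri_le_upd) (simp add: tri_rank_def)
      show "F (X(v:=Zero)) \<le> F (X'(v:=Zero))" by (rule F, rule tri_le_upd2[OF le])
      show "F (X(v:=One)) \<le> F (X'(v:=One))" by (rule F, rule tri_le_upd2[OF le])
    qed
    moreover have "(\<Sum>Y\<in>UNIV. sgd_t \<theta> \<mu> v X Y * F Y) = (1-p) * F (X(v:=Zero)) + p * F (X(v:=One))"
      unfolding sgd_sum b(1) p_def using Xv by simp
    moreover have "(\<Sum>Y\<in>UNIV. sgd_t \<theta> \<mu> v X' Y * F Y) = (1-p') * F (X'(v:=Zero)) + p' * F (X'(v:=One))"
      unfolding sgd_sum b'(1) p'_def using False by simp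
    ultimately show ?thesis by linarith
  qed
qed




lemma nn_of_distr: "is_distr \<mu> \<Longrightarrow> 0 \<le> \<mu> \<rho>"
  unfolding is_distr_def by simp

lemma sgd_zero:
  fixes \<mu> :: "('v::finite \<Rightarrow> bool) \<Rightarrow> real"
  assumes nn: "\<And>\<rho>. 0 \<le> \<mu> \<rho>" and pos: "0 < \<mu> (contr X)" and npos: "\<not> 0 < \<mu> (contr Y)"
  shows "sgd_t \<theta> \<mu> v X Y = 0"
proof -
  have z: "\<mu> (contr Y) = 0" using nn[of "contr Y"] npos by simp
  have "cond_marg (tilt \<theta> \<mu>) v (contr X) (Y v = One) = 0"
    if ag: "\<forall>u. u \<noteq> v \<longrightarrow> Y u = X u" and ns: "Y v \<noteq> Star"
  proof -
    have cYe: "(contr X)(v := (Y v = One)) = contr Y"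
    proof
      fix u show "((contr X)(v := (Y v = One))) u = contr Y u"
        using ag ns by (cases "u = v"; cases "Y v") (auto simp: contr_def)
    qed
    show ?thesis unfolding cond_marg_def cYe tilt_def z by simp
  qed
  moreover have "Y \<noteq> X" using pos npos by auto
  ultimately show ?thesis unfolding sgd_t_def by auto
qed

lemma sgd_rev_aux:
  fixes \<mu> :: "('v::finite \<Rightarrow> bool) \<Rightarrow> real"
  assumes nn: "\<And>\<rho>. 0 \<le> \<mu> \<rho>" and th: "0 < \<theta>" "\<theta> < 1" and pos: "0 < \<mu> (contr X)"
    and Xv: "X v = Zero" and Y: "Y = X(v:=One)"
  shows "lifted_pi \<theta> \<mu> X * sgd_t \<theta> \<mu> v X Y = lifted_pi \<theta> \<mu> Y * sgd_t \<theta> \<mu> v Y X"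
proof -
  have cf: "(contr X)(v:=False) = contr X" by (rule ext) (simp add: contr_def Xv)
  have cY: "contr Y = (contr X)(v:=True)" unfolding Y contr_upd by simp
  have s1: "sgd_t \<theta> \<mu> v X Y = cond_marg (tilt \<theta> \<mu>) v (contr X) True"
    unfolding sgd_t_def Y using Xv by simp
  have XY: "X = Y(v := Zero)" unfolding Y using Xv by (simp add: fun_upd_idem)
  have s2: "sgd_t \<theta> \<mu> v Y X = cond_marg (tilt \<theta> \<mu>) v (contr X) False"
  proof -
    have "sgd_t \<theta> \<mu> v Y X = cond_marg (tilt \<theta> \<mu>) v (contr Y) False"
      unfolding sgd_t_def using Xv by (simp add: Y)
    then show ?thesis unfolding cY by simp
  qed
  have pX: "lifted_pi \<theta> \<mu> X = \<mu> (contr X) * wrest \<theta> v X"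
    unfolding lifted_pi_eq wt_split[of \<theta> X v] Xv by (simp add: tw_def)
  have pY: "lifted_pi \<theta> \<mu> Y = \<mu> ((contr X)(v:=True)) * (\<theta> * wrest \<theta> v X)"
    unfolding lifted_pi_eq cY unfolding Y wt_upd by (simp add: tw_def)
  note c = cm_tilt[where \<mu>=\<mu> and v=v, OF nn pos th]
  show ?thesis unfolding s1 s2 pX pY c(1) c(2) cf
    by (simp add: field_simps)
qed

lemma sgd_rev:
  fixes \<mu> :: "('v::finite \<Rightarrow> bool) \<Rightarrow> real"
  assumes nn: "\<And>\<rho>. 0 \<le> \<mu> \<rho>" and th: "0 < \<theta>" "\<theta> < 1" and pos: "0 < \<mu> (contr X)"
    and posY: "0 < \<mu> (contr Y)"
  shows "lifted_pi \<theta> \<mu> X * sgd_t \<theta> \<mu> v X Y = lifted_pi \<theta> \<mu> Y * sgd_t \<theta> \<mu> v Y X"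
proof (cases "X = Y")
  case True then show ?thesis by simp
next
  case ne: False
  show ?thesis
  proof (cases "X v = Star \<or> Y v = Star")
    case True
    then have "sgd_t \<theta> \<mu> v X Y = 0" "sgd_t \<theta> \<mu> v Y X = 0"
      using ne by (auto simp: sgd_t_def)
    then show ?thesis by simp
  next
    case ns: False
    show ?thesis
    proof (cases "\<forall>u. u \<noteq> v \<longrightarrow> Y u = X u")
      case False
      then have "sgd_t \<theta> \<mu> v X Y = 0" "sgd_t \<theta> \<mu> v Y X = 0"
        by (auto simp: sgd_t_def)
      then show ?thesis by simp
    next
      case ag: True
      have Ye: "Y = X(v := Y v)" using ag by (auto simp: fun_eq_iff)
      have Xe: "X = Y(v := X v)" using ag by (auto simp: fun_eq_iff)
      have d: "X v \<noteq> Y v" using ne Ye by (metis fun_upd_triv)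
      show ?thesis
      proof (cases "X v")
        case Zero
        then have "Y v = One" using d ns by (cases "Y v") auto
        then show ?thesis using sgd_rev_aux[where \<mu>=\<mu>, OF nn th pos Zero] Ye by simp
      next
        case One
        then have Yz: "Y v = Zero" using d ns by (cases "Y v") auto
        have "X = Y(v := One)" using Xe One by simp
        then show ?thesis using sgd_rev_aux[where \<mu>=\<mu>, OF nn th posY Yz] by simp
      next
        case Star then show ?thesis using ns by simp
      qed
    qed
  qed
qed

lemma P_sGD_MC:
  fixes \<mu> :: "('v::finite \<Rightarrow> bool) \<Rightarrow> real"
  assumes d: "is_distr \<mu>" and ms: "monotone_system \<mu>" and th: "0 < \<theta>" "\<theta> < 1"
  shows "MC (lifted_pi \<theta> \<mu>) (P_sGD \<theta> \<mu>)"
  unfolding MC_def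
proof
  have nn: "\<And>\<rho>. 0 \<le> \<mu> \<rho>" using nn_of_distr[OF d] .
  show "reversible_wrt (lifted_pi \<theta> \<mu>) (P_sGD \<theta> \<mu>)"
    unfolding reversible_wrt_def
  proof (intro ballI)
    fix X Y :: "'v \<Rightarrow> tri"
    assume "X \<in> supp (lifted_pi \<theta> \<mu>)" "Y \<in> supp (lifted_pi \<theta> \<mu>)"
    then have pX: "0 < \<mu> (contr X)" and pY: "0 < \<mu> (contr Y)" using supp_eq[OF th] by auto
    show "lifted_pi \<theta> \<mu> X * P_sGD \<theta> \<mu> X Y = lifted_pi \<theta> \<mu> Y * P_sGD \<theta> \<mu> Y X"
      unfolding P_sGD_t sum_distrib_left mult.left_commute[of "lifted_pi \<theta> \<mu> _"]
      using sgd_rev[where \<mu>=\<mu>, OF nn th pX pY] by simp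
  qed
  show "stoch_monotone (lifted_pi \<theta> \<mu>) (P_sGD \<theta> \<mu>)"
  proof (rule stoch_mono_intro)
    fix X Y :: "'v \<Rightarrow> tri"
    assume "X \<in> supp (lifted_pi \<theta> \<mu>)" "Y \<notin> supp (lifted_pi \<theta> \<mu>)"
    then have pX: "0 < \<mu> (contr X)" and pY: "\<not> 0 < \<mu> (contr Y)" using supp_eq[OF th] by auto
    show "P_sGD \<theta> \<mu> X Y = 0"
      unfolding P_sGD_t using sgd_zero[where \<mu>=\<mu>, OF nn pX pY] by simp
  next
    fix F :: "('v \<Rightarrow> tri) \<Rightarrow> real" and X X' :: "'v \<Rightarrow> tri"
    assume F: "\<And>Y Y'. tri_le Y Y' \<Longrightarrow> F Y \<le> F Y'" and "X \<in> supp (lifted_pi \<theta> \<mu>)"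
      "X' \<in> supp (lifted_pi \<theta> \<mu>)" and le: "tri_le X X'"
    then have pX: "0 < \<mu> (contr X)" and pX': "0 < \<mu> (contr X')" using supp_eq[OF th] by auto
    show "(\<Sum>Y\<in>UNIV. P_sGD \<theta> \<mu> X Y * F Y) \<le> (\<Sum>Y\<in>UNIV. P_sGD \<theta> \<mu> X' Y * F Y)"
      unfolding P_sGD_t sum_kernel
      by (intro mult_left_mono sum_mono sgd_site_mono[where \<mu>=\<mu>, OF nn ms th pX pX' le F]) auto
  qed
qed




definition pgd_t :: "real \<Rightarrow> (('v::finite \<Rightarrow> bool) \<Rightarrow> real) \<Rightarrow> 'v \<Rightarrow> ('v \<Rightarrow> tri) \<Rightarrow> ('v \<Rightarrow> tri) \<Rightarrow> real" where
  "pgd_t \<theta> \<mu> v X Y = (if (\<forall>u. u \<noteq> v \<longrightarrow> Y u = X u) then cond_marg (lifted_pi \<theta> \<mu>) v X (Y v) else 0)"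

lemma P_piGD_t: "P_piGD \<theta> \<mu> X Y = (1 / real (card (UNIV :: 'v set))) * (\<Sum>v\<in>UNIV. pgd_t \<theta> \<mu> v X Y)"
  for X Y :: "'v::finite \<Rightarrow> tri"
  unfolding P_piGD_def pgd_t_def by simp

lemma agree_upd: "(\<forall>u. u \<noteq> v \<longrightarrow> Y u = X u) \<Longrightarrow> Y = X(v := Y v)"
  by (auto simp: fun_eq_iff)

lemma pgd_rev: "lifted_pi \<theta> \<mu> X * pgd_t \<theta> \<mu> v X Y = lifted_pi \<theta> \<mu> Y * pgd_t \<theta> \<mu> v Y X"
proof (cases "\<forall>u. u \<noteq> v \<longrightarrow> Y u = X u")
  case True
  then have Ye: "Y = X(v := Y v)" by (rule agree_upd)
  have ag2: "\<forall>u. u \<noteq> v \<longrightarrow> X u = Y u" using True by auto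
  have a: "pgd_t \<theta> \<mu> v X Y = lifted_pi \<theta> \<mu> Y / (\<Sum>b\<in>UNIV. lifted_pi \<theta> \<mu> (X(v:=b)))"
    unfolding pgd_t_def cond_marg_def using True Ye[symmetric] by simp
  have "pgd_t \<theta> \<mu> v Y X = cond_marg (lifted_pi \<theta> \<mu>) v (X(v := Y v)) (X v)"
    unfolding pgd_t_def using ag2 Ye[symmetric] by simp
  also have "\<dots> = lifted_pi \<theta> \<mu> X / (\<Sum>b\<in>UNIV. lifted_pi \<theta> \<mu> (X(v:=b)))"
    unfolding cond_marg_upd cond_marg_def by simp
  finally show ?thesis unfolding a by simp
next
  case False
  then have "\<not> (\<forall>u. u \<noteq> v \<longrightarrow> X u = Y u)" by auto
  then have "pgd_t \<theta> \<mu> v Y X = 0" unfolding pgd_t_def by (rule if_not_P)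
  moreover have "pgd_t \<theta> \<mu> v X Y = 0" unfolding pgd_t_def using False by (rule if_not_P)
  ultimately show ?thesis by simp
qed

lemma pi_nn: "(\<And>\<rho>. 0 \<le> \<mu> \<rho>) \<Longrightarrow> 0 < \<theta> \<Longrightarrow> \<theta> < 1 \<Longrightarrow> 0 \<le> lifted_pi \<theta> \<mu> X"
  unfolding lifted_pi_eq using wt_pos[of \<theta> X] by simp

lemma pgd_zero:
  fixes \<mu> :: "('v::finite \<Rightarrow> bool) \<Rightarrow> real"
  assumes nn: "\<And>\<rho>. 0 \<le> \<mu> \<rho>" and th: "0 < \<theta>" "\<theta> < 1" and Y: "Y \<notin> supp (lifted_pi \<theta> \<mu>)"
  shows "pgd_t \<theta> \<mu> v X Y = 0"
proof -
  have z: "lifted_pi \<theta> \<mu> Y = 0" using Y pi_nn[where \<mu>=\<mu>, OF nn th, of Y] unfolding supp_def by simp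
  show ?thesis
  proof (cases "\<forall>u. u \<noteq> v \<longrightarrow> Y u = X u")
    case True
    then have Ye: "Y = X(v := Y v)" by (rule agree_upd)
    show ?thesis unfolding pgd_t_def cond_marg_def using True Ye[symmetric] z by simp
  next
    case False then show ?thesis unfolding pgd_t_def by (rule if_not_P)
  qed
qed

lemma pgd_sum:
  "(\<Sum>Y\<in>UNIV. pgd_t \<theta> \<mu> v X Y * F Y) =
     cond_marg (lifted_pi \<theta> \<mu>) v X Zero * F (X(v:=Zero)) +
     cond_marg (lifted_pi \<theta> \<mu>) v X One * F (X(v:=One)) +
     cond_marg (lifted_pi \<theta> \<mu>) v X Star * F (X(v:=Star))"
proof -
  have e: "pgd_t \<theta> \<mu> v X Y * F Y = (if (\<forall>u. u \<noteq> v \<longrightarrow> Y u = X u) then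
      cond_marg (lifted_pi \<theta> \<mu>) v X (Y v) * F Y else 0)" for Y
    by (auto simp: pgd_t_def)
  have "(\<Sum>Y\<in>UNIV. pgd_t \<theta> \<mu> v X Y * F Y) = (\<Sum>a\<in>UNIV.
      (\<lambda>Y. cond_marg (lifted_pi \<theta> \<mu>) v X (Y v) * F Y) (X(v:=a)))"
    unfolding e by (rule sum_agree_off)
  then show ?thesis unfolding sum_tri by simp
qed

lemma cm_pi:
  fixes \<mu> :: "('v::finite \<Rightarrow> bool) \<Rightarrow> real" and v :: 'v
  assumes nn: "\<And>\<rho>. 0 \<le> \<mu> \<rho>" and th: "0 < \<theta>" "\<theta> < 1" and pos: "0 < \<mu> (contr X)"
  defines "p \<equiv> cond_marg \<mu> v (contr X) True"
  shows "cond_marg (lifted_pi \<theta> \<mu>) v X Zero = 1 - p"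
    "cond_marg (lifted_pi \<theta> \<mu>) v X One = \<theta> * p"
    "cond_marg (lifted_pi \<theta> \<mu>) v X Star = (1 - \<theta>) * p"
    "0 \<le> p" "p \<le> 1"
proof -
  define m0 where "m0 = \<mu> ((contr X)(v:=False))"
  define m1 where "m1 = \<mu> ((contr X)(v:=True))"
  define W where "W = wrest \<theta> v X"
  have S: "0 < m0 + m1" unfolding m0_def m1_def by (rule pos_pair[where \<mu>=\<mu>, OF nn pos])
  have m: "0 \<le> m0" "0 \<le> m1" unfolding m0_def m1_def using nn by auto
  have W: "0 < W" unfolding W_def using wrest_pos[OF th] .
  have pe: "p = m1 / (m0 + m1)" unfolding p_def cm_mu m0_def m1_def ..
  have pa: "lifted_pi \<theta> \<mu> (X(v:=a)) = \<mu> ((contr X)(v := (a \<noteq> Zero))) * (tw \<theta> a * W)" for a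
    unfolding lifted_pi_eq contr_upd wt_upd W_def ..
  have p0: "lifted_pi \<theta> \<mu> (X(v:=Zero)) = m0 * W" unfolding pa m0_def by (simp add: tw_def)
  have p1: "lifted_pi \<theta> \<mu> (X(v:=One)) = (m1 * \<theta>) * W" unfolding pa m1_def by (simp add: tw_def)
  have p2: "lifted_pi \<theta> \<mu> (X(v:=Star)) = (m1 * (1-\<theta>)) * W" unfolding pa m1_def by (simp add: tw_def)
  have canc: "x * W / ((m0 + m1) * W) = x / (m0 + m1)" for x using W by simp
  have D: "(\<Sum>b\<in>UNIV. lifted_pi \<theta> \<mu> (X(v:=b))) = (m0 + m1) * W"
    unfolding sum_tri p0 p1 p2 by (simp add: algebra_simps)
  show "cond_marg (lifted_pi \<theta> \<mu>) v X Zero = 1 - p"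
    unfolding cond_marg_def D p0 canc pe using S by (simp add: field_simps)
  show "cond_marg (lifted_pi \<theta> \<mu>) v X One = \<theta> * p"
    unfolding cond_marg_def D p1 canc pe by simp
  show "cond_marg (lifted_pi \<theta> \<mu>) v X Star = (1 - \<theta>) * p"
    unfolding cond_marg_def D p2 canc pe by simp
  show "0 \<le> p" unfolding pe using S m by simp
  show "p \<le> 1" unfolding pe using S m by simp
qed

lemma pgd_site_mono:
  fixes \<mu> :: "('v::finite \<Rightarrow> bool) \<Rightarrow> real" and F :: "('v \<Rightarrow> tri) \<Rightarrow> real"
  assumes nn: "\<And>\<rho>. 0 \<le> \<mu> \<rho>" and ms: "monotone_system \<mu>" and th: "0 < \<theta>" "\<theta> < 1"
    and pos: "0 < \<mu> (contr X)" and pos': "0 < \<mu> (contr X')" and le: "tri_le X X'"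
    and F: "\<And>Y Y'. tri_le Y Y' \<Longrightarrow> F Y \<le> F Y'"
  shows "(\<Sum>Y\<in>UNIV. pgd_t \<theta> \<mu> v X Y * F Y) \<le> (\<Sum>Y\<in>UNIV. pgd_t \<theta> \<mu> v X' Y * F Y)"
proof -
  define p where "p = cond_marg \<mu> v (contr X) True"
  define p' where "p' = cond_marg \<mu> v (contr X') True"
  note c = cm_pi[where \<mu>=\<mu> and v=v, OF nn th pos, folded p_def]
  note c' = cm_pi[where \<mu>=\<mu> and v=v, OF nn th pos', folded p'_def]
  have pp: "p \<le> p'"
    using ms feasible_of_pos[where \<mu>=\<mu>, OF nn pos] feasible_of_pos[where \<mu>=\<mu>, OF nn pos'] tri_le_contr[OF le]
    unfolding monotone_system_def p_def p'_def by (metis le_boolI)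
  define B where "B = \<theta> * F (X(v:=One)) + (1-\<theta>) * F (X(v:=Star))"
  define B' where "B' = \<theta> * F (X'(v:=One)) + (1-\<theta>) * F (X'(v:=Star))"
  have e: "(\<Sum>Y\<in>UNIV. pgd_t \<theta> \<mu> v X Y * F Y) = (1-p) * F (X(v:=Zero)) + p * B"
    unfolding pgd_sum c B_def by (simp add: algebra_simps)
  have e': "(\<Sum>Y\<in>UNIV. pgd_t \<theta> \<mu> v X' Y * F Y) = (1-p') * F (X'(v:=Zero)) + p' * B'"
    unfolding pgd_sum c' B'_def by (simp add: algebra_simps)
  have m1: "F (X(v:=Zero)) \<le> F (X(v:=One))" by (rule F, rule tri_le_upd) (simp add: tri_rank_def)
  have m2: "F (X(v:=Zero)) \<le> F (X(v:=Star))" by (rule F, rule tri_le_upd) (simp add: tri_rank_def)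
  have m3: "F (X(v:=One)) \<le> F (X'(v:=One))" by (rule F, rule tri_le_upd2[OF le])
  have m4: "F (X(v:=Star)) \<le> F (X'(v:=Star))" by (rule F, rule tri_le_upd2[OF le])
  have AB: "F (X(v:=Zero)) \<le> B"
  proof -
    have "\<theta> * F (X(v:=Zero)) \<le> \<theta> * F (X(v:=One))" using m1 th by simp
    moreover have "(1-\<theta>) * F (X(v:=Zero)) \<le> (1-\<theta>) * F (X(v:=Star))" using m2 th by simp
    ultimately show ?thesis unfolding B_def by (simp add: algebra_simps)
  qed
  have BB: "B \<le> B'"
  proof -
    have "\<theta> * F (X(v:=One)) \<le> \<theta> * F (X'(v:=One))" using m3 th by simp
    moreover have "(1-\<theta>) * F (X(v:=Star)) \<le> (1-\<theta>) * F (X'(v:=Star))" using m4 th by simp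
    ultimately show ?thesis unfolding B_def B'_def by simp
  qed
  have AA: "F (X(v:=Zero)) \<le> F (X'(v:=Zero))" by (rule F, rule tri_le_upd2[OF le])
  show ?thesis unfolding e e'
    by (rule conv_mono[OF c(4) pp c'(5) AB AA BB])
qed

lemma P_piGD_MC:
  fixes \<mu> :: "('v::finite \<Rightarrow> bool) \<Rightarrow> real"
  assumes d: "is_distr \<mu>" and ms: "monotone_system \<mu>" and th: "0 < \<theta>" "\<theta> < 1"
  shows "MC (lifted_pi \<theta> \<mu>) (P_piGD \<theta> \<mu>)"
  unfolding MC_def
proof
  have nn: "\<And>\<rho>. 0 \<le> \<mu> \<rho>" using nn_of_distr[OF d] .
  show "reversible_wrt (lifted_pi \<theta> \<mu>) (P_piGD \<theta> \<mu>)"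
    unfolding reversible_wrt_def
  proof (intro ballI)
    fix X Y :: "'v \<Rightarrow> tri"
    show "lifted_pi \<theta> \<mu> X * P_piGD \<theta> \<mu> X Y = lifted_pi \<theta> \<mu> Y * P_piGD \<theta> \<mu> Y X"
      unfolding P_piGD_t sum_distrib_left mult.left_commute[of "lifted_pi \<theta> \<mu> _"]
      using pgd_rev[of \<theta> \<mu> X _ Y] by simp
  qed
  show "stoch_monotone (lifted_pi \<theta> \<mu>) (P_piGD \<theta> \<mu>)"
  proof (rule stoch_mono_intro)
    fix X Y :: "'v \<Rightarrow> tri"
    assume "Y \<notin> supp (lifted_pi \<theta> \<mu>)"
    then show "P_piGD \<theta> \<mu> X Y = 0"
      unfolding P_piGD_t using pgd_zero[where \<mu>=\<mu>, OF nn th] by simp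
  next
    fix F :: "('v \<Rightarrow> tri) \<Rightarrow> real" and X X' :: "'v \<Rightarrow> tri"
    assume F: "\<And>Y Y'. tri_le Y Y' \<Longrightarrow> F Y \<le> F Y'" and "X \<in> supp (lifted_pi \<theta> \<mu>)"
      "X' \<in> supp (lifted_pi \<theta> \<mu>)" and le: "tri_le X X'"
    then have pX: "0 < \<mu> (contr X)" and pX': "0 < \<mu> (contr X')" using supp_eq[OF th] by auto
    show "(\<Sum>Y\<in>UNIV. P_piGD \<theta> \<mu> X Y * F Y) \<le> (\<Sum>Y\<in>UNIV. P_piGD \<theta> \<mu> X' Y * F Y)"
      unfolding P_piGD_t sum_kernel
      by (intro mult_left_mono sum_mono pgd_site_mono[where \<mu>=\<mu>, OF nn ms th pX pX' le F]) auto
  qed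
qed


theorem lemma3p5:
  fixes \<mu> :: "('v::finite \<Rightarrow> bool) \<Rightarrow> real" and \<theta> :: real
  assumes "is_distr \<mu>" and "monotone_system \<mu>" and "0 < \<theta>" and "\<theta> < 1"
  shows "MC (lifted_pi \<theta> \<mu>) (P_cl \<theta>) \<and>
         MC (lifted_pi \<theta> \<mu>) (P_sGD \<theta> \<mu>) \<and>
         MC (lifted_pi \<theta> \<mu>) (P_piGD \<theta> \<mu>)"
  using P_cl_MC[OF assms(3,4)] P_sGD_MC[OF assms] P_piGD_MC[OF assms] by blast

end
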